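(* Let $S=\{s_1<\dots<s_{k_1}\}$ and $T=\{t_1<\dots<t_{k_2}\}$ be nonempty subsets of $\{1,\dots,n-1\}$ with $\max S+\min T\le n$ and $\min S+\max T\le n$, let $A=T_n\langle S;T\rangle$, $d=\gcd\{s+t: s\in S,t\in T\}$ and $d'=\gcd(d,s_1)$. Suppose that for each $1\le i\le d$ the principal submatrix of the Boolean product $AA^T$ with rows and columns indexed by $\{v\in[n]: v\equiv i\pmod d\}$ is irreducible. Then the competition index of $A$ is at most $$2\big(\lceil n/d\rceil-1\big)\Big(\max\Big\{\Big\lceil\tfrac{t_{k_2}}{s_1}\Big\rceil,\Big\lceil\tfrac{s_{k_1}}{t_1}\Big\rceil\Big\}+1\Big)+2(s_1+t_1).$$
   Context: Boolean arithmetic on $\{0,1\}$: $1+1=1$. $T_n\langle S;T\rangle$ is the $n\times n$ $(0,1)$-matrix whose $(i,j)$-entry is $1$ iff $j-i\in S$ or $i-j\in T$. The competition index of $A$ is the smallest positive integer $q$ such that $A^{q+i}(A^T)^{q+i}=A^{q+r+i}(A^T)^{q+r+i}$ for some $r\ge1$ and all $i\ge0$. *)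

theory Defs
  imports Complex_Main
begin

text \<open>Boolean n x n matrices with index set [n] = {1..n}, represented as
  predicates on nat x nat; all operations are False outside [n] x [n].\<close>

type_synonym bmat = "nat \<Rightarrow> nat \<Rightarrow> bool"

definition bmult :: "nat \<Rightarrow> bmat \<Rightarrow> bmat \<Rightarrow> bmat" where
  "bmult n A B = (\<lambda>i j. i \<in> {1..n} \<and> j \<in> {1..n} \<and> (\<exists>k\<in>{1..n}. A i k \<and> B k j))"

definition btrans :: "nat \<Rightarrow> bmat \<Rightarrow> bmat" where
  "btrans n A = (\<lambda>i j. i \<in> {1..n} \<and> j \<in> {1..n} \<and> A j i)"

definition bident :: "nat \<Rightarrow> bmat" where
  "bident n = (\<lambda>i j. i \<in> {1..n} \<and> i = j)"

primrec bpow :: "nat \<Rightarrow> bmat \<Rightarrow> nat \<Rightarrow> bmat" where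
  "bpow n A 0 = bident n"
| "bpow n A (Suc k) = bmult n (bpow n A k) A"

definition toeplitz :: "nat \<Rightarrow> nat set \<Rightarrow> nat set \<Rightarrow> bmat" where
  "toeplitz n S T = (\<lambda>i j. i \<in> {1..n} \<and> j \<in> {1..n} \<and>
      ((i < j \<and> j - i \<in> S) \<or> (j < i \<and> i - j \<in> T)))"

definition comp_mat :: "nat \<Rightarrow> bmat \<Rightarrow> nat \<Rightarrow> bmat" where
  "comp_mat n A m = bmult n (bpow n A m) (bpow n (btrans n A) m)"

definition competition_index :: "nat \<Rightarrow> bmat \<Rightarrow> nat" where
  "competition_index n A = (LEAST q. q > 0 \<and>
     (\<exists>r\<ge>1. \<forall>i. comp_mat n A (q + i) = comp_mat n A (q + r + i)))"

definition irreducible_on :: "nat set \<Rightarrow> bmat \<Rightarrow> bool" where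
  "irreducible_on V M = (\<forall>u\<in>V. \<forall>v\<in>V. (u, v) \<in> {(x, y). x \<in> V \<and> y \<in> V \<and> M x y}\<^sup>*)"

end

theory Submission
  imports Defs
begin

lemma lt_cancel: "(q::nat) * a < a + X * a \<Longrightarrow> q < X + 1"
proof -
  assume "q * a < a + X * a"
  then have "q * a < (X + 1) * a" by (simp add: algebra_simps)
  then show "q < X + 1" using mult_less_cancel2 by blast
qed

lemma bpow_range: "bpow n A m x y \<Longrightarrow> x \<in> {1..n} \<and> y \<in> {1..n}"
  by (induction m arbitrary: y) (auto simp: bident_def bmult_def)

context
  fixes n :: nat and A :: bmat
  assumes rng: "\<And>i j. A i j \<Longrightarrow> i \<in> {1..n} \<and> j \<in> {1..n}"
begin

lemma bpow_Suc_iff: "bpow n A (Suc m) x z \<longleftrightarrow> (\<exists>y. bpow n A m x y \<and> A y z)"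
  using rng bpow_range[of n A m x] by (auto simp: bmult_def)

lemma bpow_one: "bpow n A (Suc 0) x z \<longleftrightarrow> A x z"
  unfolding bpow_Suc_iff using rng[of x z] by (auto simp: bident_def)

lemma bpow_add: "bpow n A (m1 + m2) x z \<longleftrightarrow> (\<exists>y. bpow n A m1 x y \<and> bpow n A m2 y z)"
proof (induction m2 arbitrary: z)
  case 0
  then show ?case using bpow_range[of n A m1 x z] by (auto simp: bident_def)
next
  case (Suc m2)
  have "bpow n A (m1 + Suc m2) x z \<longleftrightarrow> (\<exists>w. bpow n A (m1 + m2) x w \<and> A w z)"
    using bpow_Suc_iff by simp
  also have "\<dots> \<longleftrightarrow> (\<exists>y. bpow n A m1 x y \<and> (\<exists>w. bpow n A m2 y w \<and> A w z))"
    using Suc by blast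
  also have "\<dots> \<longleftrightarrow> (\<exists>y. bpow n A m1 x y \<and> bpow n A (Suc m2) y z)"
    using bpow_Suc_iff by simp
  finally show ?case .
qed

lemma bpow_trans: "bpow n (btrans n A) m x y \<longleftrightarrow> bpow n A m y x"
proof (induction m arbitrary: y)
  case 0
  then show ?case by (auto simp: bident_def)
next
  case (Suc m)
  have "bpow n (btrans n A) (Suc m) x y \<longleftrightarrow> (\<exists>w. bpow n A m w x \<and> A y w)"
  proof
    assume "bpow n (btrans n A) (Suc m) x y"
    then obtain w where "bpow n (btrans n A) m x w" "btrans n A w y"
      by (auto simp: bmult_def)
    then show "\<exists>w. bpow n A m w x \<and> A y w" using Suc by (auto simp: btrans_def)
  next
    assume "\<exists>w. bpow n A m w x \<and> A y w"
    then obtain w where "bpow n A m w x" "A y w" by blast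
    then show "bpow n (btrans n A) (Suc m) x y"
      using Suc rng[of y w] bpow_range[of n A m w x] by (auto simp: bmult_def btrans_def)
  qed
  also have "\<dots> \<longleftrightarrow> bpow n A (Suc 0 + m) y x"
    using bpow_add[of "Suc 0" m y x] bpow_one by auto
  finally show ?case by simp
qed

lemma comp_mat_iff:
  "comp_mat n A m u v \<longleftrightarrow> u \<in> {1..n} \<and> v \<in> {1..n} \<and> (\<exists>k. bpow n A m u k \<and> bpow n A m v k)"
proof -
  have "comp_mat n A m u v \<longleftrightarrow> u \<in> {1..n} \<and> v \<in> {1..n} \<and> (\<exists>k\<in>{1..n}. bpow n A m u k \<and> bpow n (btrans n A) m k v)"
    unfolding comp_mat_def bmult_def by simp
  also have "\<dots> \<longleftrightarrow> u \<in> {1..n} \<and> v \<in> {1..n} \<and> (\<exists>k. bpow n A m u k \<and> bpow n A m v k)"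
    unfolding bpow_trans using bpow_range[of n A m u] by blast
  finally show ?thesis .
qed

end

locale tsetup =
  fixes n :: nat and S T :: "nat set"
  assumes Sne: "S \<noteq> {}" and Tne: "T \<noteq> {}"
    and Ssub: "S \<subseteq> {1..n-1}" and Tsub: "T \<subseteq> {1..n-1}"
    and c1: "Max S + Min T \<le> n" and c2: "Min S + Max T \<le> n"
begin

definition "a = Min S"
definition "b = Min T"
definition "N = a + b"
definition "A = toeplitz n S T"

lemma finS: "finite S" using Ssub finite_subset by blast
lemma finT: "finite T" using Tsub finite_subset by blast
lemma aS: "a \<in> S" unfolding a_def using finS Sne by simp
lemma bT: "b \<in> T" unfolding b_def using finT Tne by simp
lemma a_le: "s \<in> S \<Longrightarrow> a \<le> s" unfolding a_def using finS by simp
lemma b_le: "t \<in> T \<Longrightarrow> b \<le> t" unfolding b_def using finT by simp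
lemma Smax: "s \<in> S \<Longrightarrow> s \<le> Max S" using finS by simp
lemma Tmax: "t \<in> T \<Longrightarrow> t \<le> Max T" using finT by simp
lemma a_pos: "a \<ge> 1" using aS Ssub by auto
lemma b_pos: "b \<ge> 1" using bT Tsub by auto
lemma s_bound: "s \<in> S \<Longrightarrow> s + b \<le> n" using Smax c1 unfolding b_def by fastforce
lemma t_bound: "t \<in> T \<Longrightarrow> a + t \<le> n" using Tmax c2 unfolding a_def by fastforce
lemma N_le: "N \<le> n" using t_bound[OF bT] unfolding N_def by simp

lemma rng: "A i j \<Longrightarrow> i \<in> {1..n} \<and> j \<in> {1..n}"
  unfolding A_def toeplitz_def by auto

lemma stepS: "1 \<le> x \<Longrightarrow> s \<in> S \<Longrightarrow> x + s \<le> n \<Longrightarrow> A x (x + s)"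
  unfolding A_def toeplitz_def using a_pos a_le[of s] by auto

lemma stepT: "t \<in> T \<Longrightarrow> t < x \<Longrightarrow> x \<le> n \<Longrightarrow> A x (x - t)"
  unfolding A_def toeplitz_def using b_pos b_le[of t] by auto

lemma step_cases: "A x y \<Longrightarrow> (\<exists>s\<in>S. y = x + s) \<or> (\<exists>t\<in>T. x = y + t)"
  unfolding A_def toeplitz_def by (metis add_diff_inverse_nat less_imp_le_nat not_less)

lemma outdeg: assumes "x \<in> {1..n}" shows "\<exists>y. A x y"
proof (cases "x + a \<le> n")
  case True
  then show ?thesis using stepS[OF _ aS] assms by auto
next
  case False
  then have "b < x" using t_bound[OF bT] b_le Tmax bT by auto
  then show ?thesis using stepT[OF bT] False assms by auto
qed

lemma bA_one: "bpow n A (Suc 0) x z \<longleftrightarrow> A x z"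
  apply (rule bpow_one) using rng by blast

lemma bA_add: "bpow n A (m1 + m2) x z \<longleftrightarrow> (\<exists>y. bpow n A m1 x y \<and> bpow n A m2 y z)"
  apply (rule bpow_add) using rng by blast

lemma bA_Suc: "bpow n A (Suc m) x z \<longleftrightarrow> (\<exists>y. bpow n A m x y \<and> A y z)"
  apply (rule bpow_Suc_iff) using rng by blast

definition wk :: "nat \<Rightarrow> nat \<Rightarrow> nat \<Rightarrow> int \<Rightarrow> bool" where
  "wk m x y \<delta> \<longleftrightarrow> bpow n A m x y \<and> int N dvd (int y - int x - int m * int a - \<delta>)"

lemma wk_comp: "wk m1 x y d1 \<Longrightarrow> wk m2 y z d2 \<Longrightarrow> wk (m1 + m2) x z (d1 + d2)"
  unfolding wk_def
proof (intro conjI)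
  assume h: "bpow n A m1 x y \<and> int N dvd (int y - int x - int m1 * int a - d1)"
     "bpow n A m2 y z \<and> int N dvd (int z - int y - int m2 * int a - d2)"
  then show "bpow n A (m1 + m2) x z" using bA_add by blast
  have "int N dvd ((int y - int x - int m1 * int a - d1) + (int z - int y - int m2 * int a - d2))"
    using h by (intro dvd_add) auto
  then show "int N dvd (int z - int x - int (m1 + m2) * int a - (d1 + d2))"
    by (simp add: algebra_simps)
qed

lemma wk_cong: "wk m x y d1 \<Longrightarrow> int N dvd (d1 - d2) \<Longrightarrow> wk m x y d2"
  unfolding wk_def
proof (elim conjE, intro conjI)
  assume "int N dvd (int y - int x - int m * int a - d1)" "int N dvd (d1 - d2)"
  then have "int N dvd ((int y - int x - int m * int a - d1) + (d1 - d2))" by (rule dvd_add)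
  then show "int N dvd (int y - int x - int m * int a - d2)" by (simp add: algebra_simps)
qed

lemma wk_zero: "x \<in> {1..n} \<Longrightarrow> wk 0 x x 0"
  unfolding wk_def by (simp add: bident_def)

lemma wk_range: "wk m x y d \<Longrightarrow> x \<in> {1..n} \<and> y \<in> {1..n}"
  unfolding wk_def using bpow_range by blast

lemma climb: "1 \<le> x \<Longrightarrow> x + k * a \<le> n \<Longrightarrow> wk k x (x + k * a) 0"
proof (induction k)
  case 0
  then show ?case using wk_zero by simp
next
  case (Suc k)
  then have w: "wk k x (x + k * a) 0" by simp
  have "A (x + k * a) (x + k * a + a)" using stepS[OF _ aS] Suc.prems by simp
  then have "wk (Suc 0) (x + k * a) (x + k * a + a) 0"
    unfolding wk_def using bA_one by simp
  from wk_comp[OF w this] show ?case by (simp add: algebra_simps)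
qed

lemma descend: "x \<le> n \<Longrightarrow> k * b < x \<Longrightarrow> wk k x (x - k * b) 0"
proof (induction k)
  case 0
  then show ?case using wk_zero by simp
next
  case (Suc k)
  then have w: "wk k x (x - k * b) 0" by simp
  have "b < x - k * b" "x - k * b \<le> n" using Suc.prems by auto
  then have "A (x - k * b) (x - k * b - b)" using stepT[OF bT] by blast
  moreover have "int (x - k * b - b) = int (x - k * b) - int b" using Suc.prems by (simp add: of_nat_diff)
  then have e: "int (x - k * b - b) - int (x - k * b) - int (Suc 0) * int a - 0 = - int N"
    unfolding N_def by linarith
  have "int N dvd (int (x - k * b - b) - int (x - k * b) - int (Suc 0) * int a - 0)"
    unfolding e by simp
  with \<open>A (x - k * b) (x - k * b - b)\<close> have "wk (Suc 0) (x - k * b) (x - k * b - b) 0"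
    unfolding wk_def using bA_one by blast
  from wk_comp[OF w this] show ?case by (simp add: algebra_simps)
qed

end

context tsetup begin

lemma wk_step: "A x y \<Longrightarrow> wk (Suc 0) x y (int y - int x - int a)"
  unfolding wk_def using bA_one by simp

lemma up_top: assumes "x \<in> {1..n}"
  shows "\<exists>y. wk ((n - x) div a) x y 0 \<and> n < y + a \<and> y \<le> n"
proof -
  define k where "k = (n - x) div a"
  have e: "k * a + (n - x) mod a = n - x" unfolding k_def by (rule div_mult_mod_eq)
  have m: "(n - x) mod a < a" using a_pos by simp
  have x: "1 \<le> x" "x \<le> n" using assms by auto
  have l1: "x + k * a \<le> n" using e x by linarith
  have l2: "n < x + k * a + a" using e x m by linarith
  have "wk k x (x + k * a) 0" using climb[OF x(1) l1] .
  then show ?thesis using l1 l2 unfolding k_def[symmetric] by blast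
qed

lemma down_bot: assumes "x \<in> {1..n}"
  shows "\<exists>y. wk ((x - 1) div b) x y 0 \<and> 1 \<le> y \<and> y \<le> b"
proof -
  define k where "k = (x - 1) div b"
  have e: "k * b + (x - 1) mod b = x - 1" unfolding k_def by (rule div_mult_mod_eq)
  have m: "(x - 1) mod b < b" using b_pos by simp
  have x: "1 \<le> x" "x \<le> n" using assms by auto
  have l1: "k * b < x" using e x by linarith
  have l2: "x - k * b \<le> b" using e x m by linarith
  have l3: "1 \<le> x - k * b" using l1 by linarith
  have "wk k x (x - k * b) 0" using descend[OF x(2) l1] .
  then show ?thesis using l2 l3 unfolding k_def[symmetric] by blast
qed

lemma tdev: assumes "n < z + a" "z \<le> n" "t \<in> T" "Max T \<le> X * a"
  shows "\<exists>m y. m \<le> X + 1 \<and> wk m z y (- int t - int a) \<and> n < y + a \<and> y \<le> n"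
proof -
  have tz: "t < z" using assms(1) t_bound[OF assms(3)] by linarith
  have A1: "A z (z - t)" using stepT[OF assms(3) tz assms(2)] .
  have w1: "wk (Suc 0) z (z - t) (- int t - int a)"
    using wk_step[OF A1] tz by (simp add: of_nat_diff)
  have "1 \<le> z - t" "z - t \<le> n" using tz assms(2) by linarith+
  then have r: "z - t \<in> {1..n}" by simp
  obtain y where y: "wk ((n - (z - t)) div a) (z - t) y 0" "n < y + a" "y \<le> n"
    using up_top[OF r] by blast
  have "(n - (z - t)) div a * a \<le> n - (z - t)" by (rule div_times_less_eq_dividend)
  also have "\<dots> < a + X * a" using assms(1,2,4) Tmax[OF assms(3)] tz by linarith
  finally have "(n - (z - t)) div a < X + 1" by (rule lt_cancel)
  then have q: "Suc 0 + (n - (z - t)) div a \<le> X + 1" by simp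
  have "wk (Suc 0 + (n - (z - t)) div a) z y (- int t - int a + 0)" by (rule wk_comp[OF w1 y(1)])
  then have "wk (Suc 0 + (n - (z - t)) div a) z y (- int t - int a)" by simp
  then show ?thesis using y(2,3) q by blast
qed

lemma sdev: assumes "1 \<le> z" "z \<le> b" "s \<in> S" "Max S \<le> Y * b"
  shows "\<exists>m y. m \<le> Y + 1 \<and> wk m z y (int s - int a) \<and> 1 \<le> y \<and> y \<le> b"
proof -
  have sz: "z + s \<le> n" using assms(2) s_bound[OF assms(3)] by linarith
  have A1: "A z (z + s)" using stepS[OF assms(1) assms(3) sz] .
  have w1: "wk (Suc 0) z (z + s) (int s - int a)"
    using wk_step[OF A1] by simp
  have "1 \<le> z + s" "z + s \<le> n" using sz assms(1) by linarith+
  then have r: "z + s \<in> {1..n}" by simp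
  obtain y where y: "wk ((z + s - 1) div b) (z + s) y 0" "1 \<le> y" "y \<le> b"
    using down_bot[OF r] by blast
  have "(z + s - 1) div b * b \<le> z + s - 1" by (rule div_times_less_eq_dividend)
  also have "\<dots> < b + Y * b" using assms(1,2,4) Smax[OF assms(3)] by linarith
  finally have "(z + s - 1) div b < Y + 1" by (rule lt_cancel)
  then have q: "Suc 0 + (z + s - 1) div b \<le> Y + 1" by simp
  have "wk (Suc 0 + (z + s - 1) div b) z y (int s - int a + 0)" by (rule wk_comp[OF w1 y(1)])
  then have "wk (Suc 0 + (z + s - 1) div b) z y (int s - int a)" by simp
  then show ?thesis using y(2,3) q by blast
qed

lemma tdevs: assumes "n < z + a" "z \<le> n" "set ts \<subseteq> T" "Max T \<le> X * a"
  shows "\<exists>m y. m \<le> length ts * (X + 1) \<and> wk m z y (sum_list (map (\<lambda>t. - int t - int a) ts))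
     \<and> n < y + a \<and> y \<le> n"
  using assms
proof (induction ts arbitrary: z)
  case Nil
  have "1 \<le> z" using Nil.prems(1) t_bound[OF bT] b_pos by linarith
  then have "wk 0 z z 0" using wk_zero[of z] Nil.prems(2) by simp
  moreover have "(0::nat) \<le> length [] * (X + 1)" by simp
  ultimately show ?case using Nil.prems(1,2) by fastforce
next
  case (Cons t ts)
  obtain m1 y1 where h1: "m1 \<le> X + 1" "wk m1 z y1 (- int t - int a)" "n < y1 + a" "y1 \<le> n"
    using tdev[of z t X] Cons.prems by auto
  obtain m2 y2 where h2: "m2 \<le> length ts * (X + 1)"
     "wk m2 y1 y2 (sum_list (map (\<lambda>t. - int t - int a) ts))" "n < y2 + a" "y2 \<le> n"
    using Cons.IH[of y1] h1 Cons.prems by auto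
  have w0: "wk (m1 + m2) z y2 (- int t - int a + sum_list (map (\<lambda>t. - int t - int a) ts))" by (rule wk_comp[OF h1(2) h2(2)])
  then have w: "wk (m1 + m2) z y2 (sum_list (map (\<lambda>t. - int t - int a) (t # ts)))" by simp
  have "m1 + m2 \<le> length (t # ts) * (X + 1)" using h1(1) h2(1) by simp
  then show ?case using w h2(3,4) by fastforce
qed

lemma sdevs: assumes "1 \<le> z" "z \<le> b" "set ss \<subseteq> S" "Max S \<le> Y * b"
  shows "\<exists>m y. m \<le> length ss * (Y + 1) \<and> wk m z y (sum_list (map (\<lambda>s. int s - int a) ss))
     \<and> 1 \<le> y \<and> y \<le> b"
  using assms
proof (induction ss arbitrary: z)
  case Nil
  have "z \<le> n" using Nil.prems(2) s_bound[OF aS] by linarith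
  then have "wk 0 z z 0" using wk_zero[of z] Nil.prems(1) by simp
  moreover have "(0::nat) \<le> length [] * (Y + 1)" by simp
  ultimately show ?case using Nil.prems(1,2) by fastforce
next
  case (Cons s ss)
  obtain m1 y1 where h1: "m1 \<le> Y + 1" "wk m1 z y1 (int s - int a)" "1 \<le> y1" "y1 \<le> b"
    using sdev[of z s Y] Cons.prems by auto
  obtain m2 y2 where h2: "m2 \<le> length ss * (Y + 1)"
     "wk m2 y1 y2 (sum_list (map (\<lambda>s. int s - int a) ss))" "1 \<le> y2" "y2 \<le> b"
    using Cons.IH[of y1] h1 Cons.prems by auto
  have w0: "wk (m1 + m2) z y2 (int s - int a + sum_list (map (\<lambda>s. int s - int a) ss))" by (rule wk_comp[OF h1(2) h2(2)])
  then have w: "wk (m1 + m2) z y2 (sum_list (map (\<lambda>s. int s - int a) (s # ss)))" by simp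
  have "m1 + m2 \<le> length (s # ss) * (Y + 1)" using h1(1) h2(1) by simp
  then show ?case using w h2(3,4) by fastforce
qed

lemma stayW: assumes "n < y + N" "y \<le> n"
  shows "\<exists>y'. wk k y y' 0 \<and> n < y' + N \<and> y' \<le> n"
proof (induction k)
  case 0
  have "1 \<le> y" using assms(1) N_le by linarith
  then have "wk 0 y y 0" using wk_zero assms(2) by simp
  then show ?case using assms by blast
next
  case (Suc k)
  then obtain y1 where y1: "wk k y y1 0" "n < y1 + N" "y1 \<le> n" by blast
  have r: "1 \<le> y1" using y1(2) N_le by linarith
  show ?case
  proof (cases "y1 + a \<le> n")
    case True
    then have "wk (Suc 0) y1 (y1 + a) 0" using climb[of y1 "Suc 0"] r by simp
    then have "wk (k + Suc 0) y (y1 + a) (0 + 0)" by (rule wk_comp[OF y1(1)])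
    moreover have "n < y1 + a + N" using y1(2) by linarith
    ultimately show ?thesis using True by auto
  next
    case False
    then have bl: "Suc 0 * b < y1" using t_bound[OF bT] by linarith
    have "wk (Suc 0) y1 (y1 - Suc 0 * b) 0" by (rule descend[OF y1(3) bl])
    then have "wk (k + Suc 0) y (y1 - Suc 0 * b) (0 + 0)" by (rule wk_comp[OF y1(1)])
    moreover have "n < (y1 - Suc 0 * b) + N" "y1 - Suc 0 * b \<le> n" using False bl y1(3) unfolding N_def by linarith+
    ultimately show ?thesis by auto
  qed
qed

end

context tsetup begin

definition "d = Gcd {s + t | s t. s \<in> S \<and> t \<in> T}"

lemma d_dvd: "s \<in> S \<Longrightarrow> t \<in> T \<Longrightarrow> d dvd s + t"
  unfolding d_def by (rule Gcd_dvd) blast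

lemma d_pos: "d > 0"
proof (rule ccontr)
  assume "\<not> d > 0"
  then have "d = 0" by simp
  moreover have "d dvd a + b" by (rule d_dvd[OF aS bT])
  ultimately have "a + b = 0" by simp
  then show False using a_pos by simp
qed

lemma d_N: "d dvd N" unfolding N_def using d_dvd[OF aS bT] .

lemma d_le_N: "d \<le> N" using d_N N_def a_pos by (simp add: dvd_imp_le)

lemma d_s: "s \<in> S \<Longrightarrow> int d dvd (int s - int a)"
proof -
  assume s: "s \<in> S"
  have "int d dvd int (s + b)" unfolding int_dvd_int_iff by (rule d_dvd[OF s bT])
  moreover have "int d dvd int (a + b)" unfolding int_dvd_int_iff by (rule d_dvd[OF aS bT])
  ultimately have "int d dvd (int (s + b) - int (a + b))" by (rule dvd_diff)
  then show ?thesis by simp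
qed

lemma d_t: "t \<in> T \<Longrightarrow> int d dvd (- int t - int a)"
proof -
  assume t: "t \<in> T"
  have "int d dvd int (a + t)" unfolding int_dvd_int_iff by (rule d_dvd[OF aS t])
  moreover have e: "- int t - int a = - int (a + t)" by simp
  ultimately show ?thesis by (simp only: e dvd_minus_iff)
qed

definition dv :: "nat + nat \<Rightarrow> int" where
  "dv e = (case e of Inl s \<Rightarrow> int s - int a | Inr t \<Rightarrow> - int t - int a)"

definition "Dom = Inl ` S \<union> Inr ` T"

definition rep :: "(nat + nat) list \<Rightarrow> int \<Rightarrow> bool" where
  "rep ds z \<longleftrightarrow> set ds \<subseteq> Dom \<and> int N dvd (sum_list (map dv ds) - z)"

definition "G = {z. \<exists>ds. rep ds z}"

lemma G_add: "z1 \<in> G \<Longrightarrow> z2 \<in> G \<Longrightarrow> z1 + z2 \<in> G"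
proof -
  assume "z1 \<in> G" "z2 \<in> G"
  then obtain ds1 ds2 where r: "rep ds1 z1" "rep ds2 z2" unfolding G_def by blast
  have "int N dvd ((sum_list (map dv ds1) - z1) + (sum_list (map dv ds2) - z2))"
    using r unfolding rep_def by (intro dvd_add) auto
  then have "rep (ds1 @ ds2) (z1 + z2)" using r unfolding rep_def by (simp add: algebra_simps)
  then show ?thesis unfolding G_def by blast
qed

lemma G_cong: "z \<in> G \<Longrightarrow> int N dvd (z - z') \<Longrightarrow> z' \<in> G"
proof -
  assume "z \<in> G" "int N dvd (z - z')"
  then obtain ds where r: "rep ds z" unfolding G_def by blast
  have "int N dvd ((sum_list (map dv ds) - z) + (z - z'))"
    using r \<open>int N dvd (z - z')\<close> unfolding rep_def by (intro dvd_add) auto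
  then have "rep ds z'" using r unfolding rep_def by simp
  then show ?thesis unfolding G_def by blast
qed

lemma G_dom: "e \<in> Dom \<Longrightarrow> dv e \<in> G"
proof -
  assume "e \<in> Dom"
  then have "rep [e] (dv e)" unfolding rep_def by simp
  then show ?thesis unfolding G_def by blast
qed

lemma G_0: "0 \<in> G"
proof -
  have "rep [] 0" unfolding rep_def by simp
  then show ?thesis unfolding G_def by blast
qed

lemma G_multnat: "z \<in> G \<Longrightarrow> int k * z \<in> G"
proof (induction k)
  case 0
  then show ?case using G_0 by simp
next
  case (Suc k)
  then have "z + int k * z \<in> G" using G_add by blast
  then show ?case by (simp add: algebra_simps)
qed

lemma G_mult: assumes "z \<in> G" shows "j * z \<in> G"
proof -
  have N0: "int N > 0" using a_pos N_def by simp
  have "j mod int N \<ge> 0" using N0 by simp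
  then have e: "j mod int N = int (nat (j mod int N))" by simp
  have "int (nat (j mod int N)) * z \<in> G" using G_multnat[OF assms] .
  moreover have "j * z - (j mod int N) * z = int N * ((j div int N) * z)"
  proof -
    have "j * z - (j mod int N) * z = (j - j mod int N) * z" by (simp add: left_diff_distrib)
    also have "\<dots> = (int N * (j div int N)) * z" by (simp only: minus_mod_eq_mult_div)
    finally show ?thesis by simp
  qed
  then have "int N dvd ((j mod int N) * z - j * z)"
    by (metis dvd_minus_iff dvd_triv_left minus_diff_eq)
  ultimately show ?thesis using G_cong e by metis
qed

lemma G_st: "s \<in> S \<Longrightarrow> t \<in> T \<Longrightarrow> int (s + t) \<in> G"
proof -
  assume s: "s \<in> S" and t: "t \<in> T"
  have "dv (Inl s) \<in> G" using s G_dom unfolding Dom_def by blast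
  moreover have "dv (Inr t) \<in> G" using t G_dom unfolding Dom_def by blast
  then have "(-1) * dv (Inr t) \<in> G" by (rule G_mult)
  ultimately have "dv (Inl s) + (-1) * dv (Inr t) \<in> G" by (rule G_add)
  then show ?thesis unfolding dv_def by simp
qed

lemma G_Gcd: "finite X \<Longrightarrow> (\<forall>x\<in>X. int x \<in> G) \<Longrightarrow> int (Gcd X) \<in> G"
proof (induction X rule: finite_induct)
  case empty
  then show ?case using G_0 by simp
next
  case (insert x X)
  then have h1: "int x \<in> G" "int (Gcd X) \<in> G" by auto
  obtain u v where uv: "u * int x + v * int (Gcd X) = gcd (int x) (int (Gcd X))"
    using bezout_int by blast
  have "u * int x \<in> G" "v * int (Gcd X) \<in> G" using G_mult h1 by auto
  then have "u * int x + v * int (Gcd X) \<in> G" by (rule G_add)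
  then show ?case using uv by simp
qed

lemma d_G: "int d \<in> G"
proof -
  have fin: "finite {s + t | s t. s \<in> S \<and> t \<in> T}"
  proof -
    have "{s + t | s t. s \<in> S \<and> t \<in> T} = (\<lambda>(s, t). s + t) ` (S \<times> T)" by auto
    then show ?thesis using finS finT by simp
  qed
  have "\<forall>x\<in>{s + t | s t. s \<in> S \<and> t \<in> T}. int x \<in> G" using G_st by blast
  then show ?thesis unfolding d_def using G_Gcd[OF fin] by blast
qed

lemma dvd_G: "int d dvd z \<Longrightarrow> z \<in> G"
proof -
  assume "int d dvd z"
  then obtain j where "z = int d * j" by blast
  then show ?thesis using G_mult[OF d_G, of j] by (simp add: mult.commute)
qed

end

context tsetup begin

lemma dv_dvd: "set xs \<subseteq> Dom \<Longrightarrow> int d dvd sum_list (map dv xs)"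
proof (induction xs)
  case Nil
  then show ?case by simp
next
  case (Cons e xs)
  have "int d dvd dv e"
  proof -
    have "e \<in> Dom" using Cons.prems by simp
    then consider (l) s where "s \<in> S" "e = Inl s" | (r) t where "t \<in> T" "e = Inr t"
      unfolding Dom_def by blast
    then show ?thesis
    proof cases
      case l then show ?thesis using d_s[of s] unfolding dv_def by simp
    next
      case r then show ?thesis using d_t[of t] unfolding dv_def by simp
    qed
  qed
  moreover have "int d dvd sum_list (map dv xs)" using Cons by simp
  ultimately show ?case by simp
qed

lemma N_eq: "N = d * (N div d)" using d_N by simp

lemma min_rep: assumes "z \<in> G"
  shows "\<exists>ds. rep ds z \<and> length ds + 1 \<le> N div d \<and> (\<forall>e\<in>set ds. \<not> int N dvd dv e)"
proof -
  define P where "P k \<longleftrightarrow> (\<exists>ds. rep ds z \<and> length ds = k)" for k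
  obtain ds0 where "rep ds0 z" using assms unfolding G_def by blast
  then have "P (length ds0)" unfolding P_def by blast
  define K where "K = (LEAST k. P k)"
  have "P K" unfolding K_def by (rule LeastI) fact
  then obtain ds where ds: "rep ds z" "length ds = K" unfolding P_def by blast
  have minl: "K \<le> length ds'" if "rep ds' z" for ds'
    unfolding K_def by (rule Least_le) (use that P_def in blast)
  have sub: "set ds \<subseteq> Dom" and dz: "int N dvd (sum_list (map dv ds) - z)"
    using ds(1) unfolding rep_def by auto
  have nz: "\<forall>e\<in>set ds. \<not> int N dvd dv e"
  proof (intro ballI notI)
    fix e assume e: "e \<in> set ds" "int N dvd dv e"
    define ds' where "ds' = remove1 e ds"
    have "sum_list (map dv ds) = dv e + sum_list (map dv ds')"
      unfolding ds'_def using e(1) by (rule sum_list_map_remove1)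
    then have eq: "sum_list (map dv ds') - z = (sum_list (map dv ds) - z) - dv e" by simp
    have "int N dvd ((sum_list (map dv ds) - z) - dv e)" using dz e(2) by (rule dvd_diff)
    then have "int N dvd (sum_list (map dv ds') - z)" unfolding eq .
    moreover have "set ds' \<subseteq> Dom" unfolding ds'_def using sub set_remove1_subset by fastforce
    ultimately have "rep ds' z" unfolding rep_def by blast
    moreover have "length ds' < K"
    proof -
      have "length ds > 0" using e(1) by (cases ds) auto
      then show ?thesis unfolding ds'_def using e(1) ds(2) by (simp add: length_remove1)
    qed
    ultimately show False using minl by fastforce
  qed
  define h where "h = N div d"
  have "N = d * h" unfolding h_def by (rule N_eq)
  then have Nh: "int N = int d * int h" by simp
  have dp: "int d > 0" using d_pos by simp
  have len: "K + 1 \<le> h"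
  proof (rule ccontr)
    assume "\<not> K + 1 \<le> h"
    then have Kh: "h \<le> K" by simp
    define f where "f i = sum_list (map dv (take i ds)) mod int N" for i
    define B where "B = (\<lambda>k. int d * int k) ` {..<h}"
    have fB: "f ` {0..K} \<subseteq> B"
    proof
      fix r assume "r \<in> f ` {0..K}"
      then obtain i where r: "r = f i" by blast
      have "set (take i ds) \<subseteq> Dom" using sub set_take_subset by fastforce
      then have "int d dvd sum_list (map dv (take i ds))" by (rule dv_dvd)
      moreover have "int d dvd int N" using Nh by simp
      ultimately have "int d dvd r" unfolding r f_def by (rule dvd_mod)
      then obtain q where q: "r = int d * q" by blast
      have N0: "int N > 0" using dp Nh a_pos N_def by simp
      have "0 \<le> r" "r < int N" unfolding r f_def using N0 by simp_all
      then have "0 \<le> q" "q < int h" using q Nh dp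
        by (simp_all add: zero_le_mult_iff)
      then have "r = int d * int (nat q)" "nat q < h" using q by simp_all
      then show "r \<in> B" unfolding B_def by blast
    qed
    have "\<not> inj_on f {0..K}"
    proof
      assume "inj_on f {0..K}"
      then have "card {0..K} \<le> card B" using fB by (rule card_inj_on_le) (simp add: B_def)
      moreover have "card B \<le> h" unfolding B_def using card_image_le[of "{..<h}"] by simp
      ultimately show False using Kh by simp
    qed
    then obtain x y where xy: "x \<in> {0..K}" "y \<in> {0..K}" "f x = f y" "x \<noteq> y"
      unfolding inj_on_def by blast
    obtain i j where ij: "i \<in> {0..K}" "j \<in> {0..K}" "i < j" "f i = f j"
    proof (cases "x < y")
      case True
      then show ?thesis using xy that by blast
    next
      case False
      then have "y < x" using xy(4) by simp
      then show ?thesis using xy that[of y x] by simp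
    qed
    define M where "M = sum_list (map dv (take (j - i) (drop i ds)))"
    have tj: "take j ds = take i ds @ take (j - i) (drop i ds)"
      using take_add[of i "j - i" ds] ij(3) by simp
    have sj: "sum_list (map dv (take j ds)) = sum_list (map dv (take i ds)) + M"
      unfolding M_def tj by simp
    have "int N dvd M"
    proof -
      have "sum_list (map dv (take j ds)) mod int N = sum_list (map dv (take i ds)) mod int N"
        using ij(4) unfolding f_def by simp
      then have "int N dvd (sum_list (map dv (take j ds)) - sum_list (map dv (take i ds)))"
        by (simp add: mod_eq_dvd_iff)
      then show ?thesis using sj by simp
    qed
    define ds' where "ds' = take i ds @ drop j ds"
    have "sum_list (map dv ds) = sum_list (map dv (take j ds @ drop j ds))"
      by simp
    also have "\<dots> = sum_list (map dv (take j ds)) + sum_list (map dv (drop j ds))"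
      by (simp only: map_append sum_list_append)
    finally have "sum_list (map dv ds) = sum_list (map dv (take j ds)) + sum_list (map dv (drop j ds))" .
    then have "sum_list (map dv ds) = sum_list (map dv ds') + M"
      unfolding ds'_def using sj by simp
    then have eq2: "sum_list (map dv ds') - z = (sum_list (map dv ds) - z) - M" by simp
    have "int N dvd ((sum_list (map dv ds) - z) - M)" using dz \<open>int N dvd M\<close> by (rule dvd_diff)
    then have "int N dvd (sum_list (map dv ds') - z)" unfolding eq2 .
    moreover have "set ds' \<subseteq> Dom"
    proof -
      have "set (take i ds) \<subseteq> set ds" "set (drop j ds) \<subseteq> set ds"
        by (rule set_take_subset, rule set_drop_subset)
      then show ?thesis unfolding ds'_def using sub by auto
    qed
    ultimately have "rep ds' z" unfolding rep_def by blast
    moreover have "length ds' < K"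
    proof -
      have "length ds' = min (length ds) i + (length ds - j)" unfolding ds'_def by simp
      moreover have "i < j" "j \<le> K" using ij by auto
      ultimately show ?thesis using ds(2) by simp
    qed
    ultimately show False using minl by fastforce
  qed
  show ?thesis using ds(1) ds(2) len nz unfolding h_def by blast
qed

lemma dv_l: "dv (Inl s) = int s - int a" unfolding dv_def by simp
lemma dv_r: "dv (Inr t) = - int t - int a" unfolding dv_def by simp

lemma split_dev: "set ds \<subseteq> Dom \<Longrightarrow> \<exists>ss ts. set ss \<subseteq> S \<and> set ts \<subseteq> T \<and> length ss + length ts = length ds
  \<and> sum_list (map dv ds) = sum_list (map (\<lambda>s. int s - int a) ss) + sum_list (map (\<lambda>t. - int t - int a) ts)
  \<and> (\<forall>s\<in>set ss. Inl s \<in> set ds) \<and> (\<forall>t\<in>set ts. Inr t \<in> set ds)"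
proof (induction ds)
  case Nil
  then show ?case by simp
next
  case (Cons e ds)
  then obtain ss ts where h: "set ss \<subseteq> S" "set ts \<subseteq> T" "length ss + length ts = length ds"
    "sum_list (map dv ds) = sum_list (map (\<lambda>s. int s - int a) ss) + sum_list (map (\<lambda>t. - int t - int a) ts)"
    "\<forall>s\<in>set ss. Inl s \<in> set ds" "\<forall>t\<in>set ts. Inr t \<in> set ds" by auto
  have "e \<in> Dom" using Cons.prems by simp
  then consider (l) s where "s \<in> S" "e = Inl s" | (r) t where "t \<in> T" "e = Inr t"
    unfolding Dom_def by blast
  then show ?case
  proof cases
    case l
    have "sum_list (map dv (e # ds)) = sum_list (map (\<lambda>s. int s - int a) (s # ss)) + sum_list (map (\<lambda>t. - int t - int a) ts)"
      using h(4) l(2) by (simp add: dv_l)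
    moreover have "set (s # ss) \<subseteq> S" using h(1) l(1) by simp
    moreover have "length (s # ss) + length ts = length (e # ds)" using h(3) by simp
    moreover have "\<forall>s'\<in>set (s # ss). Inl s' \<in> set (e # ds)" using h(5) l(2) by simp
    moreover have "\<forall>t\<in>set ts. Inr t \<in> set (e # ds)" using h(6) by simp
    ultimately show ?thesis using h(2) by blast
  next
    case r
    have "sum_list (map dv (e # ds)) = sum_list (map (\<lambda>s. int s - int a) ss) + sum_list (map (\<lambda>t. - int t - int a) (t # ts))"
      using h(4) r(2) by (simp add: dv_r)
    moreover have "set (t # ts) \<subseteq> T" using h(2) r(1) by simp
    moreover have "length ss + length (t # ts) = length (e # ds)" using h(3) by simp
    moreover have "\<forall>t'\<in>set (t # ts). Inr t' \<in> set (e # ds)" using h(6) r(2) by simp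
    moreover have "\<forall>s\<in>set ss. Inl s \<in> set (e # ds)" using h(5) by simp
    ultimately show ?thesis using h(1) by blast
  qed
qed

end

context tsetup begin

lemma h_pos: "N div d \<ge> 1"
proof -
  have "N > 0" unfolding N_def using a_pos by simp
  show ?thesis
  proof (rule ccontr)
    assume "\<not> N div d \<ge> 1"
    then have z: "N div d = 0" by simp
    have "N = d * 0" using N_eq unfolding z .
    then show False using \<open>N > 0\<close> by simp
  qed
qed

lemma cong_walk: "bpow n A m x y \<Longrightarrow> int d dvd (int y - int x - int m * int a)"
proof (induction m arbitrary: y)
  case 0
  then show ?case by (simp add: bident_def)
next
  case (Suc m)
  then obtain w where w: "bpow n A m x w" "A w y" using bA_Suc by blast
  have ih: "int d dvd (int w - int x - int m * int a)" using Suc.IH[OF w(1)] .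
  have st: "int d dvd (int y - int w - int a)"
  proof -
    consider (s) s where "s \<in> S" "y = w + s" | (t) t where "t \<in> T" "w = y + t"
      using step_cases[OF w(2)] by blast
    then show ?thesis
    proof cases
      case s
      then show ?thesis using d_s[OF s(1)] by simp
    next
      case t
      then show ?thesis using d_t[OF t(1)] by simp
    qed
  qed
  have "int d dvd ((int w - int x - int m * int a) + (int y - int w - int a))"
    using ih st by (rule dvd_add)
  then show ?case by (simp add: algebra_simps)
qed

lemma extend: "bpow n A m u k \<Longrightarrow> bpow n A m v k \<Longrightarrow> \<exists>k'. bpow n A (m + j) u k' \<and> bpow n A (m + j) v k'"
proof (induction j)
  case 0
  then show ?case by auto
next
  case (Suc j)
  then obtain k1 where k1: "bpow n A (m + j) u k1" "bpow n A (m + j) v k1" by blast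
  have "k1 \<in> {1..n}" using bpow_range k1(1) by blast
  then obtain k2 where "A k1 k2" using outdeg by blast
  then have "bpow n A (Suc (m + j)) u k2" "bpow n A (Suc (m + j)) v k2"
    using k1 bA_Suc by blast+
  then show ?case by auto
qed

lemma dvd_small: "int N dvd (x - y) \<Longrightarrow> n < x + N \<Longrightarrow> x \<le> n \<Longrightarrow> n < y + N \<Longrightarrow> y \<le> n \<Longrightarrow> x = y"
proof (rule ccontr)
  assume h: "int N dvd (int x - int y)" "n < x + N" "x \<le> n" "n < y + N" "y \<le> n" "x \<noteq> y"
  then have "int x - int y \<noteq> 0" by simp
  then have "\<bar>int N\<bar> \<le> \<bar>int x - int y\<bar>" using h(1) by (rule dvd_imp_le_int)
  moreover have "\<bar>int x - int y\<bar> < int N" using h(2-5) by linarith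
  ultimately show False by simp
qed

end

lemma AR1:
  fixes n a c d L X Tm :: nat
  assumes "0 < a" "n \<le> c * d" "d \<le> a + Tm" "Tm \<le> X * a" "X + 1 \<le> L"
  shows "n div a \<le> c * L"
proof -
  have "n div a * a \<le> n" by (rule div_times_less_eq_dividend)
  also have "\<dots> \<le> c * d" by fact
  also have "\<dots> \<le> c * (a + X * a)" using assms(3,4) by simp
  also have "\<dots> = c * (X + 1) * a" by (simp add: algebra_simps)
  also have "\<dots> \<le> c * L * a" using assms(5) by (intro mult_le_mono1 mult_le_mono2)
  finally show ?thesis using assms(1) by simp
qed

lemma AR2:
  fixes a b d L X Y :: nat
  assumes "0 < a" "0 < b" "b \<le> X * a" "a + d \<le> Y * b" "X + 1 \<le> L" "Y + 1 \<le> L" "2 * d \<le> a + b"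
  shows "d * (a + b) \<le> L * a * b"
proof (cases "d \<le> b")
  case True
  have "d * (a + b) \<le> b * (a + b)" using True by simp
  also have "\<dots> = a * b + b * b" by (simp add: algebra_simps)
  also have "\<dots> \<le> a * b + (X * a) * b" using assms(3) by simp
  also have "\<dots> = (X + 1) * a * b" by (simp add: algebra_simps)
  also have "\<dots> \<le> L * a * b" using assms(5) by (intro mult_le_mono1)
  finally show ?thesis .
next
  case False
  then have ba: "b \<le> a" using assms(7) by linarith
  have dab: "d \<le> a + b" using assms(7) by linarith
  have "d * b \<le> (a + b) * a" using mult_le_mono[OF dab ba] .
  then have "d * (a + b) \<le> d * a + (a + b) * a" by (simp add: algebra_simps)
  also have "\<dots> = a * b + (a + d) * a" by (simp add: algebra_simps)
  also have "\<dots> \<le> a * b + (Y * b) * a" using assms(4) by simp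
  also have "\<dots> = (Y + 1) * a * b" by (simp add: algebra_simps)
  also have "\<dots> \<le> L * a * b" using assms(6) by (intro mult_le_mono1)
  finally show ?thesis .
qed

lemma AR3:
  fixes n a b c d L :: nat
  assumes "0 < a" "0 < b" "n \<le> c * d" "d * (a + b) \<le> L * a * b"
  shows "n div a + n div b \<le> c * L"
proof -
  have "(n div a + n div b) * (a * b) = (n div a * a) * b + (n div b * b) * a"
    by (simp add: algebra_simps)
  also have "\<dots> \<le> n * b + n * a"
    by (intro add_mono mult_le_mono1 div_times_less_eq_dividend)
  also have "\<dots> = n * (a + b)" by (simp add: algebra_simps)
  also have "\<dots> \<le> c * d * (a + b)" using assms(3) by simp
  also have "\<dots> = c * (d * (a + b))" by simp
  also have "\<dots> \<le> c * (L * a * b)" using assms(4) by simp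
  also have "\<dots> = (c * L) * (a * b)" by simp
  finally show ?thesis using assms(1,2) by simp
qed

context tsetup begin

lemma V_walk:
  assumes v: "v \<in> {1..n}" and ss: "set ss \<subseteq> S" and ts: "set ts \<subseteq> T"
    and hX: "Max T \<le> X * a" and hY: "Max S \<le> Y * b"
  shows "\<exists>m y. wk m v y (sum_list (map (\<lambda>s. int s - int a) ss) + sum_list (map (\<lambda>t. - int t - int a) ts))
    \<and> n < y + a \<and> y \<le> n
    \<and> m \<le> (if ss = [] then 0 else (v - 1) div b + length ss * (Y + 1)) + (n - 1) div a + length ts * (X + 1)"
proof (cases "ss = []")
  case True
  obtain y1 where y1: "wk ((n - v) div a) v y1 0" "n < y1 + a" "y1 \<le> n" using up_top[OF v] by blast
  obtain m2 y2 where y2: "m2 \<le> length ts * (X + 1)" "wk m2 y1 y2 (sum_list (map (\<lambda>t. - int t - int a) ts))"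
    "n < y2 + a" "y2 \<le> n" using tdevs[OF y1(2) y1(3) ts hX] by blast
  have w: "wk ((n - v) div a + m2) v y2 (0 + sum_list (map (\<lambda>t. - int t - int a) ts))"
    by (rule wk_comp[OF y1(1) y2(2)])
  have "n - v \<le> n - 1" using v by simp linarith
  then have "(n - v) div a \<le> (n - 1) div a" by (rule div_le_mono)
  then have "(n - v) div a + m2 \<le> (if ss = [] then 0 else (v - 1) div b + length ss * (Y + 1)) + (n - 1) div a + length ts * (X + 1)"
    using True y2(1) by simp
  moreover have "wk ((n - v) div a + m2) v y2 (sum_list (map (\<lambda>s. int s - int a) ss) + sum_list (map (\<lambda>t. - int t - int a) ts))"
    using w True by simp
  ultimately show ?thesis using y2(3,4) by blast
next
  case False
  obtain y0 where y0: "wk ((v - 1) div b) v y0 0" "1 \<le> y0" "y0 \<le> b" using down_bot[OF v] by blast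
  obtain m1 y1 where y1: "m1 \<le> length ss * (Y + 1)" "wk m1 y0 y1 (sum_list (map (\<lambda>s. int s - int a) ss))"
    "1 \<le> y1" "y1 \<le> b" using sdevs[OF y0(2) y0(3) ss hY] by blast
  have r1: "y1 \<in> {1..n}" using y1(3,4) s_bound[OF aS] by simp
  obtain y2 where y2: "wk ((n - y1) div a) y1 y2 0" "n < y2 + a" "y2 \<le> n" using up_top[OF r1] by blast
  obtain m3 y3 where y3: "m3 \<le> length ts * (X + 1)" "wk m3 y2 y3 (sum_list (map (\<lambda>t. - int t - int a) ts))"
    "n < y3 + a" "y3 \<le> n" using tdevs[OF y2(2) y2(3) ts hX] by blast
  have w01: "wk ((v - 1) div b + m1) v y1 (0 + sum_list (map (\<lambda>s. int s - int a) ss))"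
    by (rule wk_comp[OF y0(1) y1(2)])
  have w012: "wk ((v - 1) div b + m1 + (n - y1) div a) v y2 ((0 + sum_list (map (\<lambda>s. int s - int a) ss)) + 0)"
    by (rule wk_comp[OF w01 y2(1)])
  have w: "wk ((v - 1) div b + m1 + (n - y1) div a + m3) v y3 (((0 + sum_list (map (\<lambda>s. int s - int a) ss)) + 0) + sum_list (map (\<lambda>t. - int t - int a) ts))"
    by (rule wk_comp[OF w012 y3(2)])
  have "n - y1 \<le> n - 1" using y1(3) by linarith
  then have "(n - y1) div a \<le> (n - 1) div a" by (rule div_le_mono)
  then have "(v - 1) div b + m1 + (n - y1) div a + m3 \<le> (if ss = [] then 0 else (v - 1) div b + length ss * (Y + 1)) + (n - 1) div a + length ts * (X + 1)"
    using False y1(1) y3(1) by simp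
  moreover have "wk ((v - 1) div b + m1 + (n - y1) div a + m3) v y3 (sum_list (map (\<lambda>s. int s - int a) ss) + sum_list (map (\<lambda>t. - int t - int a) ts))"
    using w by simp
  ultimately show ?thesis using y3(3,4) by blast
qed

end

context tsetup begin

lemma n_pos: "n \<ge> 1" using N_le a_pos N_def by simp

lemma d_le_aT: "d \<le> a + Max T"
  using d_le_N Tmax[OF bT] unfolding N_def by simp

lemma big_n_s: assumes "s \<in> S" "s \<noteq> a" shows "N + d \<le> n" "a + d \<le> s"
proof -
  have "a \<le> s" using a_le[OF assms(1)] .
  then have "a < s" using assms(2) by simp
  have "int d dvd int (s - a)" using d_s[OF assms(1)] \<open>a \<le> s\<close> by (simp add: of_nat_diff)
  then have "d dvd (s - a)" by simp
  then have "d \<le> s - a" using \<open>a < s\<close> by (intro dvd_imp_le) simp_all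
  then show "a + d \<le> s" using \<open>a < s\<close> by simp
  then show "N + d \<le> n" using s_bound[OF assms(1)] unfolding N_def by simp
qed

lemma big_n_t: assumes "t \<in> T" "t \<noteq> b" shows "N + d \<le> n"
proof -
  have "b \<le> t" using b_le[OF assms(1)] .
  then have "b < t" using assms(2) by simp
  have "int d dvd (int (a + t) - int (a + b))"
    using d_dvd[OF aS assms(1)] d_dvd[OF aS bT] by (intro dvd_diff) (simp_all only: int_dvd_int_iff)
  then have "int d dvd int (t - b)" using \<open>b < t\<close> by (simp add: of_nat_diff)
  then have "d dvd (t - b)" by simp
  then have "d \<le> t - b" using \<open>b < t\<close> by (intro dvd_imp_le) simp_all
  then show "N + d \<le> n" using t_bound[OF assms(1)] \<open>b < t\<close> unfolding N_def by simp
qed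

lemma merge:
  assumes u: "u \<in> {1..n}" and v: "v \<in> {1..n}" and duv: "int d dvd (int u - int v)"
    and hX: "Max T \<le> X * a" and hY: "Max S \<le> Y * b" and hc: "n \<le> c * d"
  shows "\<exists>m k. m \<le> 2 * (c - 1) * (max X Y + 1) + 2 * N \<and> bpow n A m u k \<and> bpow n A m v k"
proof -
  define L where "L = max X Y + 1"
  have XL: "X + 1 \<le> L" and YL: "Y + 1 \<le> L" unfolding L_def by auto
  define z where "z = int u - int v"
  have "z \<in> G" unfolding z_def using duv by (rule dvd_G)
  then obtain ds where ds: "rep ds z" "length ds + 1 \<le> N div d" "\<forall>e\<in>set ds. \<not> int N dvd dv e"
    using min_rep by blast
  have sub: "set ds \<subseteq> Dom" and dz: "int N dvd (sum_list (map dv ds) - z)"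
    using ds(1) unfolding rep_def by auto
  obtain ss ts where sp: "set ss \<subseteq> S" "set ts \<subseteq> T" "length ss + length ts = length ds"
    "sum_list (map dv ds) = sum_list (map (\<lambda>s. int s - int a) ss) + sum_list (map (\<lambda>t. - int t - int a) ts)"
    "\<forall>s\<in>set ss. Inl s \<in> set ds" "\<forall>t\<in>set ts. Inr t \<in> set ds"
    using split_dev[OF sub] by blast
  define \<Sigma> where "\<Sigma> = sum_list (map (\<lambda>s. int s - int a) ss) + sum_list (map (\<lambda>t. - int t - int a) ts)"
  obtain mV yV where V: "wk mV v yV \<Sigma>" "n < yV + a" "yV \<le> n"
    "mV \<le> (if ss = [] then 0 else (v - 1) div b + length ss * (Y + 1)) + (n - 1) div a + length ts * (X + 1)"
    using V_walk[OF v sp(1) sp(2) hX hY] unfolding \<Sigma>_def by blast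
  obtain yU where U: "wk ((n - u) div a) u yU 0" "n < yU + a" "yU \<le> n" using up_top[OF u] by blast
  define mU where "mU = (n - u) div a"
  define TT where "TT = max mU mV"
  have aN: "a \<le> N" unfolding N_def by simp
  obtain yU' where U': "wk (TT - mU) yU yU' 0" "n < yU' + N" "yU' \<le> n"
    using stayW[of yU "TT - mU"] U(2,3) aN by fastforce
  obtain yV' where V': "wk (TT - mV) yV yV' 0" "n < yV' + N" "yV' \<le> n"
    using stayW[of yV "TT - mV"] V(2,3) aN by fastforce
  have wU: "wk (mU + (TT - mU)) u yU' (0 + 0)" using wk_comp[OF U(1)[folded mU_def] U'(1)] .
  have wV: "wk (mV + (TT - mV)) v yV' (\<Sigma> + 0)" using wk_comp[OF V(1) V'(1)] .
  have e1: "mU + (TT - mU) = TT" "mV + (TT - mV) = TT" unfolding TT_def by auto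
  have bU: "bpow n A TT u yU'" and dU: "int N dvd (int yU' - int u - int TT * int a - 0)"
    using wU unfolding wk_def e1 by auto
  have bV: "bpow n A TT v yV'" and dV: "int N dvd (int yV' - int v - int TT * int a - \<Sigma>)"
    using wV unfolding wk_def e1 by auto
  have dS: "int N dvd (\<Sigma> - z)" using dz sp(4) unfolding \<Sigma>_def by simp
  have "int N dvd ((int yU' - int u - int TT * int a - 0) - (int yV' - int v - int TT * int a - \<Sigma>) - (\<Sigma> - z))"
    by (rule dvd_diff[OF dvd_diff[OF dU dV] dS])
  then have "int N dvd (int yU' - int yV')" unfolding z_def by (simp add: algebra_simps)
  then have eqy: "yU' = yV'" using dvd_small U'(2,3) V'(2,3) by blast
  have dT: "d \<le> a + Max T" by (rule d_le_aT)
  have n1: "n \<ge> 1" by (rule n_pos)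
  have c1: "c \<ge> 1" using hc n1 by (cases c) auto
  have mUb: "mU \<le> n div a" unfolding mU_def by (intro div_le_mono) simp
  have na: "n div a \<le> c * L" using AR1[OF _ hc dT hX XL] a_pos by simp
  have na1: "(n - 1) div a \<le> n div a" by (intro div_le_mono) simp
  have TTb: "TT \<le> 2 * (c - 1) * L + 2 * N"
  proof (cases "ds = []")
    case True
    then have "ss = []" "ts = []" using sp(3) by auto
    then have "mV \<le> n div a" using V(4) na1 by simp
    then have T1: "TT \<le> n div a" using mUb unfolding TT_def by simp
    show ?thesis
    proof (cases "c \<ge> 2")
      case True
      have cL: "c * L \<le> 2 * (c - 1) * L" using True by (intro mult_le_mono1) simp
      have "TT \<le> 2 * (c - 1) * L" using le_trans[OF le_trans[OF T1 na] cL] .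
      then show ?thesis by (rule trans_le_add1)
    next
      case False
      then have "c = 1" using c1 by simp
      then have "n \<le> N" using hc d_le_N by simp
      moreover have "n div a \<le> n" by (rule div_le_dividend)
      ultimately have "TT \<le> N" using T1 by linarith
      then show ?thesis by linarith
    qed
  next
    case False
    then have hge: "length ds + 1 \<le> N div d" "length ds \<ge> 1" using ds(2) by (auto simp: Suc_le_eq)
    have Nd: "N = d * (N div d)" by (rule N_eq)
    have big: "N + d \<le> n"
    proof (cases "ss = []")
      case False
      then obtain s where s: "s \<in> set ss" by (cases ss) auto
      then have "Inl s \<in> set ds" using sp(5) by blast
      then have "\<not> int N dvd dv (Inl s)" using ds(3) by blast
      then have "s \<noteq> a" by (auto simp: dv_l)
      then show ?thesis using big_n_s(1)[of s] s sp(1) by blast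
    next
      case True
      then have "ts \<noteq> []" using sp(3) False by auto
      then obtain t where t: "t \<in> set ts" by (cases ts) auto
      then have "Inr t \<in> set ds" using sp(6) by blast
      then have "\<not> int N dvd dv (Inr t)" using ds(3) by blast
      then have "t \<noteq> b"
      proof (intro notI)
        assume nd: "\<not> int N dvd dv (Inr t)" and tb: "t = b"
        have "dv (Inr t) = - int N" unfolding tb dv_r N_def by simp
        then show False using nd by simp
      qed
      then show ?thesis using big_n_t[of t] t sp(2) by blast
    qed
    have "(N div d + 1) * d \<le> c * d" using big hc Nd by (simp add: algebra_simps)
    then have hc2: "N div d + 1 \<le> c" using d_pos by (simp only: mult_le_cancel2)
    then have Kc: "length ss + length ts + 2 \<le> c" using hge(1) sp(3) by simp
    have "length ss * (Y + 1) \<le> length ss * L" using YL by (rule mult_le_mono2)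
    moreover have "length ts * (X + 1) \<le> length ts * L" using XL by (rule mult_le_mono2)
    ultimately have devs: "length ss * (Y + 1) + length ts * (X + 1) \<le> (length ss + length ts) * L"
      unfolding add_mult_distrib by (rule add_mono)
    have Kc2: "(length ss + length ts) * L \<le> (c - 2) * L" using Kc by (intro mult_le_mono1) simp
    have dv2: "length ss * (Y + 1) + length ts * (X + 1) \<le> (c - 2) * L" using le_trans[OF devs Kc2] .
    show ?thesis
    proof (cases "ss = []")
      case True
      then have m1: "mV \<le> n div a + length ts * (X + 1)" using V(4) na1 by simp
      have "length ss * (Y + 1) = 0" using True by simp
      then have "mV \<le> c * L + (c - 2) * L" using m1 dv2 na by linarith
      then have "TT \<le> c * L + (c - 2) * L" using mUb na unfolding TT_def by simp
      also have "c * L + (c - 2) * L = 2 * (c - 1) * L" using Kc by (simp add: algebra_simps)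
      finally show ?thesis by simp
    next
      case False
      then obtain s where s: "s \<in> set ss" by (cases ss) auto
      then have "Inl s \<in> set ds" using sp(5) by blast
      then have "\<not> int N dvd dv (Inl s)" using ds(3) by blast
      then have sa: "s \<noteq> a" by (auto simp: dv_l)
      have sS: "s \<in> S" using s sp(1) by blast
      have ads: "a + d \<le> Max S" using big_n_s(2)[OF sS sa] Smax[OF sS] by simp
      have bX: "b \<le> X * a" using hX Tmax[OF bT] by simp
      have aY: "a + d \<le> Y * b" using ads hY by simp
      have "2 * d \<le> d * (N div d)" using hge(1) hge(2) by simp
      then have twod: "2 * d \<le> a + b" using Nd unfolding N_def by simp
      have ar2: "d * (a + b) \<le> L * a * b" using AR2[OF _ _ bX aY XL YL twod] a_pos b_pos by simp
      have ab: "n div a + n div b \<le> c * L" using AR3[OF _ _ hc ar2] a_pos b_pos by simp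
      have "v - 1 \<le> n" using v by simp linarith
      then have vb: "(v - 1) div b \<le> n div b" by (rule div_le_mono)
      have "mV \<le> (v - 1) div b + length ss * (Y + 1) + (n - 1) div a + length ts * (X + 1)"
        using V(4) False by simp
      also have "\<dots> \<le> (n div a + n div b) + (length ss * (Y + 1) + length ts * (X + 1))"
        using vb na1 by simp
      also have "\<dots> \<le> c * L + (c - 2) * L" using ab dv2 by (rule add_mono)
      finally have "TT \<le> c * L + (c - 2) * L" using mUb na unfolding TT_def by simp
      also have "c * L + (c - 2) * L = 2 * (c - 1) * L" using Kc by (simp add: algebra_simps)
      finally show ?thesis by simp
    qed
  qed
  show ?thesis using bU bV eqy TTb unfolding L_def by blast
qed

end

context tsetup begin

lemma cA: "comp_mat n A m u v \<longleftrightarrow> u \<in> {1..n} \<and> v \<in> {1..n} \<and> (\<exists>k. bpow n A m u k \<and> bpow n A m v k)"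
  apply (rule comp_mat_iff) using rng by blast

lemma comp_eq:
  assumes hX: "Max T \<le> X * a" and hY: "Max S \<le> Y * b" and hc: "n \<le> c * d"
    and m: "2 * (c - 1) * (max X Y + 1) + 2 * N \<le> m"
  shows "comp_mat n A m = (\<lambda>u v. u \<in> {1..n} \<and> v \<in> {1..n} \<and> int d dvd (int u - int v))"
proof (intro ext iffI)
  fix u v
  assume "comp_mat n A m u v"
  then obtain k where k: "u \<in> {1..n}" "v \<in> {1..n}" "bpow n A m u k" "bpow n A m v k" using cA by blast
  have "int d dvd ((int k - int v - int m * int a) - (int k - int u - int m * int a))"
    using cong_walk[OF k(4)] cong_walk[OF k(3)] by (rule dvd_diff)
  then show "u \<in> {1..n} \<and> v \<in> {1..n} \<and> int d dvd (int u - int v)" using k by simp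
next
  fix u v
  assume h: "u \<in> {1..n} \<and> v \<in> {1..n} \<and> int d dvd (int u - int v)"
  then obtain m0 k where mk: "m0 \<le> 2 * (c - 1) * (max X Y + 1) + 2 * N" "bpow n A m0 u k" "bpow n A m0 v k"
    using merge[OF _ _ _ hX hY hc] by blast
  then obtain k' where "bpow n A (m0 + (m - m0)) u k'" "bpow n A (m0 + (m - m0)) v k'"
    using extend by blast
  moreover have "m0 + (m - m0) = m" using mk(1) m by simp
  ultimately show "comp_mat n A m u v" using h cA by auto
qed

lemma ci_bound:
  assumes hX: "Max T \<le> X * a" and hY: "Max S \<le> Y * b" and hc: "n \<le> c * d"
  shows "competition_index n A \<le> 2 * (c - 1) * (max X Y + 1) + 2 * N"
proof -
  define B where "B = 2 * (c - 1) * (max X Y + 1) + 2 * N"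
  have Bp: "B > 0" unfolding B_def N_def using a_pos by simp
  have "\<forall>i. comp_mat n A (B + i) = comp_mat n A (B + 1 + i)"
  proof
    fix i
    show "comp_mat n A (B + i) = comp_mat n A (B + 1 + i)"
      using comp_eq[OF hX hY hc, of "B + i"] comp_eq[OF hX hY hc, of "B + 1 + i"] unfolding B_def by simp
  qed
  then have "B > 0 \<and> (\<exists>r\<ge>1. \<forall>i. comp_mat n A (B + i) = comp_mat n A (B + r + i))" using Bp by blast
  then show ?thesis unfolding competition_index_def B_def[symmetric] by (rule Least_le)
qed

end

theorem theorem3p5:
  fixes n :: nat and S T :: "nat set"
  assumes "S \<noteq> {}" and "T \<noteq> {}"
    and "S \<subseteq> {1..n-1}" and "T \<subseteq> {1..n-1}"
    and "Max S + Min T \<le> n" and "Min S + Max T \<le> n"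
  defines "A \<equiv> toeplitz n S T"
    and "d \<equiv> Gcd {s + t | s t. s \<in> S \<and> t \<in> T}"
  assumes "\<forall>i\<in>{1..d}. irreducible_on {v \<in> {1..n}. v mod d = i mod d} (bmult n A (btrans n A))"
  shows "int (competition_index n A) \<le>
    2 * (\<lceil>real n / real d\<rceil> - 1) *
      (max \<lceil>real (Max T) / real (Min S)\<rceil> \<lceil>real (Max S) / real (Min T)\<rceil> + 1)
    + 2 * int (Min S + Min T)"
proof -
  interpret ts: tsetup n S T using assms(1-6) by unfold_locales
  have A: "A = ts.A" unfolding A_def ts.A_def ..
  have d: "d = ts.d" unfolding d_def ts.d_def ..
  have a: "Min S = ts.a" unfolding ts.a_def ..
  have b: "Min T = ts.b" unfolding ts.b_def ..
  define X where "X = nat \<lceil>real (Max T) / real (Min S)\<rceil>"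
  define Y where "Y = nat \<lceil>real (Max S) / real (Min T)\<rceil>"
  define c where "c = nat \<lceil>real n / real d\<rceil>"
  have ap: "real (Min S) > 0" using ts.a_pos a by simp
  have bp: "real (Min T) > 0" using ts.b_pos b by simp
  have dp: "real d > 0" using ts.d_pos d by simp
  have np: "real n > 0" using ts.n_pos by simp
  have "0 \<le> real (Max T) / real (Min S)" by simp
  then have "0 \<le> \<lceil>real (Max T) / real (Min S)\<rceil>" by linarith
  then have Xc: "int X = \<lceil>real (Max T) / real (Min S)\<rceil>" unfolding X_def by simp
  have "0 \<le> real (Max S) / real (Min T)" by simp
  then have "0 \<le> \<lceil>real (Max S) / real (Min T)\<rceil>" by linarith
  then have Yc: "int Y = \<lceil>real (Max S) / real (Min T)\<rceil>" unfolding Y_def by simp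
  have "0 \<le> real n / real d" by simp
  then have "0 \<le> \<lceil>real n / real d\<rceil>" by linarith
  then have cc: "int c = \<lceil>real n / real d\<rceil>" unfolding c_def by simp
  have "0 < real n / real d" using np dp by simp
  moreover have "real n / real d \<le> real_of_int \<lceil>real n / real d\<rceil>" by (rule le_of_int_ceiling)
  ultimately have "0 < real_of_int \<lceil>real n / real d\<rceil>" by linarith
  then have "0 < \<lceil>real n / real d\<rceil>" by simp
  then have "1 \<le> int c" unfolding cc by simp
  then have c1: "c \<ge> 1" by simp
  have "real (Max T) / real (Min S) \<le> real X" using Xc le_of_int_ceiling
    by (metis of_int_of_nat_eq)
  then have "real (Max T) \<le> real (X * ts.a)" using ap a by (simp add: divide_le_eq)
  then have hX: "Max T \<le> X * ts.a" by (simp only: of_nat_le_iff)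
  have "real (Max S) / real (Min T) \<le> real Y" using Yc le_of_int_ceiling
    by (metis of_int_of_nat_eq)
  then have "real (Max S) \<le> real (Y * ts.b)" using bp b by (simp add: divide_le_eq)
  then have hY: "Max S \<le> Y * ts.b" by (simp only: of_nat_le_iff)
  have "real n / real d \<le> real c" using cc le_of_int_ceiling
    by (metis of_int_of_nat_eq)
  then have "real n \<le> real (c * ts.d)" using dp d by (simp add: divide_le_eq)
  then have hc: "n \<le> c * ts.d" by (simp only: of_nat_le_iff)
  have main: "competition_index n A \<le> 2 * (c - 1) * (max X Y + 1) + 2 * ts.N"
    unfolding A by (rule ts.ci_bound[OF hX hY hc])
  have "int (2 * (c - 1) * (max X Y + 1) + 2 * ts.N) =
    2 * (int c - 1) * (max (int X) (int Y) + 1) + 2 * int (Min S + Min T)"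
  proof -
    have mx: "int (max X Y) = max (int X) (int Y)" by (simp add: max_def)
    have e1: "int (c - 1) = int c - 1" using c1 by simp
    have "int (2 * (c - 1) * (max X Y + 1) + 2 * ts.N) = 2 * int (c - 1) * (int (max X Y) + 1) + 2 * int ts.N"
      by (simp only: of_nat_add of_nat_mult of_nat_numeral of_nat_1)
    also have "\<dots> = 2 * (int c - 1) * (max (int X) (int Y) + 1) + 2 * int (Min S + Min T)"
      unfolding e1 mx ts.N_def a b ..
    finally show ?thesis .
  qed
  then show ?thesis using main unfolding Xc Yc cc by linarith
qed

end
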